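(* Let $F:\mathcal{P}(V,A)\to S_2(A)$ be a consular election rule satisfying SPO and SPP. Let $P$ be a profile, $i$ a voter, $W=F(P)$, $t=\mathrm{best}(P_i,W)$, $s=\mathrm{worst}(P_i,W)$, and let $W'=F(P^{i\uparrow s})$. Then (1) $\mathrm{best}(P_i^{\uparrow s},W')\in\{t,s\}$, and (2) $\mathrm{worst}(P_i^{\uparrow s},W')\in\{s,t\}$.
   Context: $V$ is a finite nonempty set of voters, $A$ a finite set of alternatives; a profile $P$ assigns to each voter $i$ a linear order $P_i$ on $A$ (strict part $\succ_i$, weak part $\succeq_i$); $P_i'P_{-i}$ replaces voter $i$'s order by $P_i'$. $S_2(A)$ is the set of 2-element subsets of $A$; a consular election rule is a map $F:\mathcal{P}(V,A)\to S_2(A)$. $\mathrm{best}(P_i,W)$, $\mathrm{worst}(P_i,W)$ are the $P_i$-best and $P_i$-worst elements of $W$. SPO: for all $P$, $i$, $P_i'$, $\mathrm{best}(P_i,F(P))\succeq_i\mathrm{best}(P_i,F(P_i'P_{-i}))$; SPP: same with $\mathrm{worst}$. $P_i^{\uparrow s}$ is the linear order obtained from $P_i$ by swapping $s$ with the alternative directly above it (no change if $s$ is already ranked first), and $P^{i\uparrow s}$ is the profile obtained from $P$ by replacing $P_i$ with $P_i^{\uparrow s}$. *)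

theory Defs
  imports Main
begin

text \<open>A linear order on A is a relation R :: 'a rel with linear_order_on A R;
  (x, y) \<in> R means x \<succeq> y (x is weakly preferred to y).\<close>

definition profile :: "'v set \<Rightarrow> 'a set \<Rightarrow> ('v \<Rightarrow> 'a rel) \<Rightarrow> bool" where
  "profile V A P \<longleftrightarrow> (\<forall>i\<in>V. linear_order_on A (P i)) \<and> (\<forall>i. i \<notin> V \<longrightarrow> P i = {})"

definition S2 :: "'a set \<Rightarrow> 'a set set" where
  "S2 A = {W. W \<subseteq> A \<and> card W = 2}"

definition consular_rule :: "'v set \<Rightarrow> 'a set \<Rightarrow> (('v \<Rightarrow> 'a rel) \<Rightarrow> 'a set) \<Rightarrow> bool" where
  "consular_rule V A F \<longleftrightarrow> (\<forall>P. profile V A P \<longrightarrow> F P \<in> S2 A)"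

definition best :: "'a rel \<Rightarrow> 'a set \<Rightarrow> 'a" where
  "best R W = (THE x. x \<in> W \<and> (\<forall>y\<in>W. (x, y) \<in> R))"

definition worst :: "'a rel \<Rightarrow> 'a set \<Rightarrow> 'a" where
  "worst R W = (THE x. x \<in> W \<and> (\<forall>y\<in>W. (y, x) \<in> R))"

definition SPO :: "'v set \<Rightarrow> 'a set \<Rightarrow> (('v \<Rightarrow> 'a rel) \<Rightarrow> 'a set) \<Rightarrow> bool" where
  "SPO V A F \<longleftrightarrow> (\<forall>P i R'. profile V A P \<longrightarrow> i \<in> V \<longrightarrow> linear_order_on A R' \<longrightarrow>
      (best (P i) (F P), best (P i) (F (P(i := R')))) \<in> P i)"

definition SPP :: "'v set \<Rightarrow> 'a set \<Rightarrow> (('v \<Rightarrow> 'a rel) \<Rightarrow> 'a set) \<Rightarrow> bool" where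
  "SPP V A F \<longleftrightarrow> (\<forall>P i R'. profile V A P \<longrightarrow> i \<in> V \<longrightarrow> linear_order_on A R' \<longrightarrow>
      (worst (P i) (F P), worst (P i) (F (P(i := R')))) \<in> P i)"

definition directly_above :: "'a rel \<Rightarrow> 'a \<Rightarrow> 'a \<Rightarrow> bool" where
  "directly_above R s u \<longleftrightarrow> (u, s) \<in> R \<and> u \<noteq> s \<and>
     (\<forall>w. (u, w) \<in> R \<and> (w, s) \<in> R \<longrightarrow> w = u \<or> w = s)"

definition swp :: "'a \<Rightarrow> 'a \<Rightarrow> 'a \<Rightarrow> 'a" where
  "swp a b x = (if x = a then b else if x = b then a else x)"

definition swap_up :: "'a rel \<Rightarrow> 'a \<Rightarrow> 'a rel" where
  "swap_up R s = (if \<exists>u. directly_above R s u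
     then (let u = (THE u. directly_above R s u) in map_prod (swp s u) (swp s u) ` R)
     else R)"

definition profile_up :: "('v \<Rightarrow> 'a rel) \<Rightarrow> 'v \<Rightarrow> 'a \<Rightarrow> ('v \<Rightarrow> 'a rel)" where
  "profile_up P i s = P(i := swap_up (P i) s)"

end

theory Submission
  imports Defs
begin

lemma lo_facts:
  assumes "linear_order_on A R"
  shows "R \<subseteq> A \<times> A" "\<And>x. x \<in> A \<Longrightarrow> (x,x) \<in> R"
    "\<And>x y z. (x,y) \<in> R \<Longrightarrow> (y,z) \<in> R \<Longrightarrow> (x,z) \<in> R"
    "\<And>x y. (x,y) \<in> R \<Longrightarrow> (y,x) \<in> R \<Longrightarrow> x = y"
    "\<And>x y. x \<in> A \<Longrightarrow> y \<in> A \<Longrightarrow> x \<noteq> y \<Longrightarrow> (x,y) \<in> R \<or> (y,x) \<in> R"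
  using assms unfolding linear_order_on_def partial_order_on_def preorder_on_def
    refl_on_def total_on_def antisym_on_def
  by (auto dest: transD)

lemma best_pair:
  assumes "linear_order_on A R" "a \<in> A" "b \<in> A" "a \<noteq> b"
  shows "best R {a,b} = (if (a,b) \<in> R then a else b)"
proof -
  note L = lo_facts[OF assms(1)]
  show ?thesis
  proof (cases "(a,b) \<in> R")
    case True
    have "best R {a,b} = a" unfolding best_def
      apply (rule the_equality)
      using True assms by (auto intro: L(2) dest: L(4))
    then show ?thesis using True by simp
  next
    case False
    then have ba: "(b,a) \<in> R" using L(5)[of a b] assms by auto
    have "best R {a,b} = b" unfolding best_def
      apply (rule the_equality)
      using ba False assms by (auto intro: L(2) dest: L(4))
    then show ?thesis using False by simp
  qed
qed

lemma worst_pair: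
  assumes "linear_order_on A R" "a \<in> A" "b \<in> A" "a \<noteq> b"
  shows "worst R {a,b} = (if (a,b) \<in> R then b else a)"
proof -
  note L = lo_facts[OF assms(1)]
  show ?thesis
  proof (cases "(a,b) \<in> R")
    case True
    have "worst R {a,b} = b" unfolding worst_def
      apply (rule the_equality)
      using True assms by (auto intro: L(2) dest: L(4))
    then show ?thesis using True by simp
  next
    case False
    then have ba: "(b,a) \<in> R" using L(5)[of a b] assms by auto
    have "worst R {a,b} = a" unfolding worst_def
      apply (rule the_equality)
      using ba False assms by (auto intro: L(2) dest: L(4))
    then show ?thesis using False by simp
  qed
qed

lemma best_in_pair:
  assumes "linear_order_on A R" "a \<in> A" "b \<in> A" "a \<noteq> b"
  shows "best R {a,b} \<in> {a,b}" "worst R {a,b} \<in> {a,b}"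
  using best_pair[OF assms] worst_pair[OF assms] by auto

lemma best_dom:
  assumes "linear_order_on A R" "a \<in> A" "b \<in> A" "a \<noteq> b" "x \<in> {a,b}"
  shows "(best R {a,b}, x) \<in> R" "(x, worst R {a,b}) \<in> R"
  using best_pair[OF assms(1-4)] worst_pair[OF assms(1-4)] lo_facts[OF assms(1)] assms
  by (auto split: if_splits) blast+

lemma S2_pair: "W \<in> S2 A \<Longrightarrow> \<exists>a b. W = {a,b} \<and> a \<in> A \<and> b \<in> A \<and> a \<noteq> b"
  unfolding S2_def by (auto simp: card_2_iff)

lemma swp_inv[simp]: "swp a b (swp a b x) = x"
  unfolding swp_def by auto

lemma swp_mem: "a \<in> A \<Longrightarrow> b \<in> A \<Longrightarrow> (swp a b x \<in> A) = (x \<in> A)"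
  unfolding swp_def by auto

lemma swap_mem: "((x,y) \<in> map_prod (swp a b) (swp a b) ` R) = ((swp a b x, swp a b y) \<in> R)"
proof
  assume "(x,y) \<in> map_prod (swp a b) (swp a b) ` R"
  then show "(swp a b x, swp a b y) \<in> R" by auto
next
  assume "(swp a b x, swp a b y) \<in> R"
  then have "map_prod (swp a b) (swp a b) (swp a b x, swp a b y) \<in> map_prod (swp a b) (swp a b) ` R"
    by blast
  then show "(x,y) \<in> map_prod (swp a b) (swp a b) ` R" by simp
qed

lemma swap_lo:
  assumes "linear_order_on A R" "a \<in> A" "b \<in> A"
  shows "linear_order_on A (map_prod (swp a b) (swp a b) ` R)"
proof -
  note L = lo_facts[OF assms(1)]
  let ?f = "swp a b"
  let ?R = "map_prod ?f ?f ` R"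
  have sub: "?R \<subseteq> A \<times> A"
  proof
    fix p assume "p \<in> ?R"
    then obtain x y where p: "p = (x,y)" and "(?f x, ?f y) \<in> R" using swap_mem by (metis surj_pair)
    then show "p \<in> A \<times> A" using L(1) swp_mem[OF assms(2,3)] by blast
  qed
  show ?thesis
    unfolding linear_order_on_def partial_order_on_def preorder_on_def
      refl_on_def total_on_def antisym_on_def
  proof (intro conjI ballI allI impI sub)
    fix x assume "x \<in> A" then show "(x,x) \<in> ?R"
      using swap_mem L(2) swp_mem[OF assms(2,3)] by metis
  next
    show "trans ?R" unfolding trans_def using swap_mem L(3) by metis
  next
    fix x y assume "(x,y) \<in> ?R" "(y,x) \<in> ?R"
    then have "?f x = ?f y" using swap_mem L(4) by metis
    then show "x = y" by (metis swp_inv)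
  next
    fix x y assume "x \<in> A" "y \<in> A" "x \<noteq> y"
    then have "?f x \<in> A" "?f y \<in> A" "?f x \<noteq> ?f y" using swp_mem[OF assms(2,3)] by (auto, metis swp_inv)
    then show "(x,y) \<in> ?R \<or> (y,x) \<in> ?R" using swap_mem L(5) by metis
  qed
qed


lemma da_unique:
  assumes "linear_order_on A R" "directly_above R s u1" "directly_above R s u2"
  shows "u1 = u2"
proof -
  note L = lo_facts[OF assms(1)]
  have "u1 \<in> A" "u2 \<in> A" using assms(2,3) L(1) unfolding directly_above_def by auto
  then show ?thesis using assms(2,3) L(5)[of u1 u2] unfolding directly_above_def by metis
qed

theorem lemma9:
  fixes V :: "'v set" and A :: "'a set" and F :: "('v \<Rightarrow> 'a rel) \<Rightarrow> 'a set"
  assumes "finite V" and "V \<noteq> {}" and "finite A"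
    and "consular_rule V A F" and "SPO V A F" and "SPP V A F"
    and "profile V A P" and "i \<in> V"
  defines "W \<equiv> F P"
  defines "t \<equiv> best (P i) W"
  defines "s \<equiv> worst (P i) W"
  defines "W' \<equiv> F (profile_up P i s)"
  shows "best (swap_up (P i) s) W' \<in> {t, s} \<and> worst (swap_up (P i) s) W' \<in> {s, t}"
proof -
  define R where "R = P i"
  have loR: "linear_order_on A R" using assms(7,8) unfolding profile_def R_def by auto
  note L = lo_facts[OF loR]
  have WS2: "W \<in> S2 A" using assms(4,7) unfolding consular_rule_def W_def by auto
  then obtain a b where ab: "W = {a,b}" "a \<in> A" "b \<in> A" "a \<noteq> b" using S2_pair by blast
  have tW: "t \<in> W" and sW: "s \<in> W" using best_in_pair[OF loR ab(2-4)] ab(1)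
    unfolding t_def s_def R_def by auto
  have ts: "(t,s) \<in> R" using best_dom[OF loR ab(2-4)] ab(1) sW unfolding t_def R_def by auto
  have tns: "t \<noteq> s"
  proof
    assume "t = s"
    then have "(t,a) \<in> R" "(b,t) \<in> R" "(t,b) \<in> R" "(a,t) \<in> R"
      using best_dom[OF loR ab(2-4)] ab(1) unfolding t_def s_def R_def by auto
    then show False using L(4) ab(4) by metis
  qed
  have Wts: "W = {t,s}" using tW sW tns ab by auto
  have tA: "t \<in> A" and sA: "s \<in> A" using tW sW ab by auto
  define R' where "R' = swap_up R s"
  define P' where "P' = profile_up P i s"
  have P'eq: "P' = P(i := R')" unfolding P'_def profile_up_def R'_def R_def by simp
  have loR': "linear_order_on A R'"
  proof (cases "\<exists>u. directly_above R s u")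
    case True
    then obtain u where u: "directly_above R s u" by blast
    have "u \<in> A" using u L(1) unfolding directly_above_def by auto
    moreover have "(THE u. directly_above R s u) = u"
      using u da_unique[OF loR] by blast
    ultimately show ?thesis unfolding R'_def swap_up_def using True swap_lo[OF loR sA] by (simp add: Let_def)
  qed (simp add: R'_def swap_up_def loR)
  have profP': "profile V A P'" using assms(7,8) loR' unfolding P'eq profile_def by auto
  have W'S2: "W' \<in> S2 A" using assms(4) profP' unfolding consular_rule_def W'_def P'_def by auto
  then obtain c d where cd: "W' = {c,d}" "c \<in> A" "d \<in> A" "c \<noteq> d" using S2_pair by blast
  have eqW': "F (P(i := R')) = W'" using P'eq by (simp add: W'_def P'_def)
  have eqW'': "F P' = W'" by (simp add: W'_def P'_def)
  have PP': "P'(i := R) = P" unfolding P'eq R_def by simp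
  have P'i: "P' i = R'" unfolding P'eq by simp
  have A1: "\<forall>x\<in>W'. (t,x) \<in> R"
  proof
    fix x assume x: "x \<in> W'"
    have "(best (P i) (F P), best (P i) (F (P(i := R')))) \<in> P i"
      using assms(5,7,8) loR' unfolding SPO_def by blast
    then have "(best R W, best R W') \<in> R" unfolding eqW' W_def[symmetric] R_def .
    then have "(t, best R W') \<in> R" unfolding t_def R_def .
    moreover have "(best R W', x) \<in> R" using best_dom[OF loR cd(2-4)] x cd(1) by auto
    ultimately show "(t,x) \<in> R" using L(3) by blast
  qed
  have B1: "\<exists>x\<in>W'. (s,x) \<in> R"
  proof -
    have "(worst (P i) (F P), worst (P i) (F (P(i := R')))) \<in> P i"
      using assms(6,7,8) loR' unfolding SPP_def by blast
    then have "(worst R W, worst R W') \<in> R" unfolding eqW' W_def[symmetric] R_def .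
    then have "(s, worst R W') \<in> R" unfolding s_def R_def .
    moreover have "worst R W' \<in> W'" using best_in_pair[OF loR cd(2-4)] cd(1) by auto
    ultimately show ?thesis by blast
  qed
  have C1: "\<exists>x\<in>W'. (x, best R' W) \<in> R'"
  proof -
    have "(best (P' i) (F P'), best (P' i) (F (P'(i := R)))) \<in> P' i"
      using assms(5) profP' assms(8) loR unfolding SPO_def by blast
    then have "(best R' W', best R' W) \<in> R'" unfolding PP' P'i W_def[symmetric] eqW'' .
    moreover have "best R' W' \<in> W'" using best_in_pair[OF loR' cd(2-4)] cd(1) by auto
    ultimately show ?thesis by blast
  qed
  have D1: "\<forall>x\<in>W'. (x, worst R' W) \<in> R'"
  proof
    fix x assume x: "x \<in> W'"
    have "(worst (P' i) (F P'), worst (P' i) (F (P'(i := R)))) \<in> P' i"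
      using assms(6) profP' assms(8) loR unfolding SPP_def by blast
    then have "(worst R' W', worst R' W) \<in> R'" unfolding PP' P'i W_def[symmetric] eqW'' .
    moreover have "(x, worst R' W') \<in> R'" using best_dom[OF loR' cd(2-4)] x cd(1) by auto
    ultimately show "(x, worst R' W) \<in> R'" using lo_facts(3)[OF loR'] by blast
  qed
  have W'eq: "W' = {t,s}"
  proof (cases "\<exists>u. directly_above R s u")
    case False
    then have "R' = R" unfolding R'_def swap_up_def by auto
    then have "P' = P" unfolding P'eq R_def by simp
    then show ?thesis using Wts unfolding W'_def P'_def W_def by simp
  next
    case True
    then obtain u where u: "directly_above R s u" by blast
    have theu: "(THE u. directly_above R s u) = u"
      using u da_unique[OF loR] by blast
    have R'def: "R' = map_prod (swp s u) (swp s u) ` R"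
      unfolding R'_def swap_up_def using True theu by (simp add: Let_def)
    have uA: "u \<in> A" using u L(1) unfolding directly_above_def by auto
    have us: "(u,s) \<in> R" "u \<noteq> s" and ubet: "\<And>w. (u,w) \<in> R \<Longrightarrow> (w,s) \<in> R \<Longrightarrow> w = u \<or> w = s"
      using u unfolding directly_above_def by auto
    have tu: "(t,u) \<in> R"
    proof (rule ccontr)
      assume "(t,u) \<notin> R"
      then have "(u,t) \<in> R" "t \<noteq> u" using L(5)[OF tA uA] L(2)[OF tA] by auto
      then show False using ubet ts tns by blast
    qed
    have sw: "\<And>x y. ((x,y) \<in> R') = ((swp s u x, swp s u y) \<in> R)"
      unfolding R'def by (rule swap_mem)
    show ?thesis
    proof (cases "u = t")
      case True
      have "(s,t) \<in> R'" using sw[of s t] us True unfolding swp_def by auto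
      then have wt: "worst R' W = t" using worst_pair[OF loR' sA tA tns[symmetric]] Wts
        by (simp add: insert_commute)
      have "W' \<subseteq> {t,s}"
      proof
        fix x assume x: "x \<in> W'"
        have "(x,t) \<in> R'" using D1 x wt by auto
        moreover have "swp s u t = s" using True unfolding swp_def by auto
        ultimately have "(swp s u x, s) \<in> R" using sw[of x t] by simp
        moreover have "(t,x) \<in> R" using A1 x by auto
        ultimately show "x \<in> {t,s}" using ubet True unfolding swp_def by (auto split: if_splits)
      qed
      then show ?thesis using cd tns by (auto simp: doubleton_eq_iff)
    next
      case False
      have swt: "swp s u t = t" using False tns unfolding swp_def by auto
      have sws: "swp s u s = u" unfolding swp_def by auto
      have swu: "swp s u u = s" unfolding swp_def by auto
      have tsR': "(t,s) \<in> R'" using sw[of t s] swt sws tu by simp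
      have bt: "best R' W = t" using best_pair[OF loR' tA sA tns] Wts tsR' by simp
      have ws: "worst R' W = s" using worst_pair[OF loR' tA sA tns] Wts tsR' by simp
      have D2: "\<forall>x\<in>W'. (swp s u x, u) \<in> R" using D1 ws sw[of _ s] sws by simp
      have nu: "u \<notin> W'"
      proof
        assume "u \<in> W'"
        then have "(s,u) \<in> R" using D2 swu by force
        then show False using us L(4) by blast
      qed
      have "s \<in> W'"
      proof -
        obtain x where x: "x \<in> W'" "(s,x) \<in> R" using B1 by blast
        show ?thesis
        proof (rule ccontr)
          assume "s \<notin> W'"
          then have "x \<noteq> s" "x \<noteq> u" using x nu by auto
          then have "swp s u x = x" unfolding swp_def by auto
          then have "(x,u) \<in> R" using D2 x by force
          then have "(s,u) \<in> R" using x L(3) by blast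
          then show False using us L(4) by blast
        qed
      qed
      moreover have "t \<in> W'"
      proof -
        obtain x where x: "x \<in> W'" "(swp s u x, t) \<in> R" using C1 bt sw[of _ t] swt by auto
        have "x \<noteq> u" using x nu by auto
        moreover have "x \<noteq> s"
        proof
          assume "x = s" then have "(u,t) \<in> R" using x sws by simp
          then show False using tu L(4) False by blast
        qed
        ultimately have "swp s u x = x" unfolding swp_def by auto
        then have "(x,t) \<in> R" using x by simp
        then have "x = t" using A1 x L(4) by blast
        then show ?thesis using x by simp
      qed
      ultimately show ?thesis using cd tns by (auto simp: doubleton_eq_iff)
    qed
  qed
  have "best R' W' \<in> {t,s}" "worst R' W' \<in> {t,s}"
    using best_in_pair[OF loR' tA sA tns] W'eq by auto
  then show ?thesis unfolding R'_def R_def by auto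
qed

end
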